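(* For $\mu\in\mathbb C$ and complex numbers $x_1,\dots,x_N$ and $y_1,\dots,y_N$ (pairwise distinct within each family and $x_a\neq y_b$, so that all expressions are defined), $$\mathcal I^{(\mu)}_N(\{x\},\{y\})=(-1)^N\mathcal A^-_{\{x\}}\!\left[\mu E^+_{\{y\}}\right]=(-1)^N\mathcal A^+_{\{y\}}\!\left[\mu E^-_{\{x\}}\right].$$
   Context: Let $\eta\in\mathbb C\setminus\{0\}$. For a family $\{x\}=\{x_1,\dots,x_M\}$ and $y\in\mathbb C$, $E^\pm_{\{x\}}(y)=\prod_{n=1}^M\frac{y-x_n\pm\eta}{y-x_n}$. With $V(x_1,\dots,x_M)=\prod_{1\le b<a\le M}(x_a-x_b)$, for pairwise distinct $x_a$ and a function $f$ defined there, $\mathcal A^\pm_{\{x\}}[f]=\det_{1\le a,b\le M}[x_a^{b-1}-f(x_a)(x_a\pm\eta)^{b-1}]/V(x_1,\dots,x_M)$. Let $t_\mu(x)=\frac\mu x-\frac1{x+\eta}$. The generalized Izergin determinant is $$\mathcal I^{(\mu)}_N(\{x\},\{y\})=\frac{\prod_{a,b=1}^N(x_a-y_b+\eta)}{V(x_1,\dots,x_N)V(y_N,\dots,y_1)}\det_{1\le a,b\le N}\big[t_\mu(x_a-y_b)\big].$$ *)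

theory Defs
  imports "Jordan_Normal_Form.Determinant"
begin

text \<open>Families are 0-indexed: the paper's x_1,...,x_M are x 0, ..., x (M-1).
  Determinants are the Jordan_Normal_Form determinant of an explicit M x M matrix.\<close>

definition E_plus :: "complex \<Rightarrow> nat \<Rightarrow> (nat \<Rightarrow> complex) \<Rightarrow> complex \<Rightarrow> complex" where
  "E_plus \<eta> M x y = (\<Prod>n<M. (y - x n + \<eta>) / (y - x n))"

definition E_minus :: "complex \<Rightarrow> nat \<Rightarrow> (nat \<Rightarrow> complex) \<Rightarrow> complex \<Rightarrow> complex" where
  "E_minus \<eta> M x y = (\<Prod>n<M. (y - x n - \<eta>) / (y - x n))"

definition Vand :: "nat \<Rightarrow> (nat \<Rightarrow> complex) \<Rightarrow> complex" where
  "Vand M x = (\<Prod>a<M. \<Prod>b<a. (x a - x b))"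

definition A_plus :: "complex \<Rightarrow> nat \<Rightarrow> (nat \<Rightarrow> complex) \<Rightarrow> (complex \<Rightarrow> complex) \<Rightarrow> complex" where
  "A_plus \<eta> M x f =
     det (mat M M (\<lambda>(a, b). x a ^ b - f (x a) * (x a + \<eta>) ^ b)) / Vand M x"

definition A_minus :: "complex \<Rightarrow> nat \<Rightarrow> (nat \<Rightarrow> complex) \<Rightarrow> (complex \<Rightarrow> complex) \<Rightarrow> complex" where
  "A_minus \<eta> M x f =
     det (mat M M (\<lambda>(a, b). x a ^ b - f (x a) * (x a - \<eta>) ^ b)) / Vand M x"

definition t_mu :: "complex \<Rightarrow> complex \<Rightarrow> complex \<Rightarrow> complex" where
  "t_mu \<mu> \<eta> z = \<mu> / z - 1 / (z + \<eta>)"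

text \<open>Generalized Izergin determinant; V(y_N,...,y_1) is the Vandermonde of the reversed family.\<close>
definition Izergin :: "complex \<Rightarrow> complex \<Rightarrow> nat \<Rightarrow> (nat \<Rightarrow> complex) \<Rightarrow> (nat \<Rightarrow> complex) \<Rightarrow> complex" where
  "Izergin \<mu> \<eta> N x y =
     (\<Prod>a<N. \<Prod>b<N. (x a - y b + \<eta>)) / (Vand N x * Vand N (\<lambda>i. y (N - 1 - i)))
     * det (mat N N (\<lambda>(a, b). t_mu \<mu> \<eta> (x a - y b)))"

end

theory Submission
  imports Defs
begin

lemma permutes_less: "p permutes {0..<(n::nat)} \<Longrightarrow> i < n \<Longrightarrow> p i < n"
  using permutes_in_image[of p "{0..<n}" i] by auto

lemma det_rows_expand:
  fixes P Q :: "nat \<Rightarrow> nat \<Rightarrow> 'a::comm_ring_1"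
  shows "det (mat n n (\<lambda>(a,b). P a b + Q a b)) =
    (\<Sum>S\<in>Pow {0..<n}. det (mat n n (\<lambda>(a,b). if a \<in> S then Q a b else P a b)))"
proof -
  let ?U = "{0..<n}"
  have "det (mat n n (\<lambda>(a,b). P a b + Q a b)) =
     (\<Sum>p\<in>{p. p permutes ?U}. signof p * (\<Prod>i\<in>?U. Q i (p i) + P i (p i)))"
    by (subst det_def'[of _ n]) (auto intro!: sum.cong prod.cong simp: add.commute permutes_less)
  also have "\<dots> = (\<Sum>p\<in>{p. p permutes ?U}. \<Sum>S\<in>Pow ?U. signof p * ((\<Prod>i\<in>S. Q i (p i)) * (\<Prod>i\<in>?U-S. P i (p i))))"
    by (simp add: prod_add sum_distrib_left)
  also have "\<dots> = (\<Sum>S\<in>Pow ?U. \<Sum>p\<in>{p. p permutes ?U}. signof p * ((\<Prod>i\<in>S. Q i (p i)) * (\<Prod>i\<in>?U-S. P i (p i))))"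
    by (rule sum.swap)
  also have "\<dots> = (\<Sum>S\<in>Pow ?U. det (mat n n (\<lambda>(a,b). if a \<in> S then Q a b else P a b)))"
  proof (rule sum.cong[OF refl])
    fix S assume S: "S \<in> Pow ?U"
    show "(\<Sum>p\<in>{p. p permutes ?U}. signof p * ((\<Prod>i\<in>S. Q i (p i)) * (\<Prod>i\<in>?U-S. P i (p i))))
       = det (mat n n (\<lambda>(a,b). if a \<in> S then Q a b else P a b))"
    proof (subst det_def'[of _ n], simp, rule sum.cong[OF refl])
      fix p assume p: "p \<in> {p. p permutes ?U}"
      have "(\<Prod>i\<in>?U. mat n n (\<lambda>(a,b). if a \<in> S then Q a b else P a b) $$ (i, p i))
          = (\<Prod>i\<in>?U. if i \<in> S then Q i (p i) else P i (p i))"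
        using p by (auto intro!: prod.cong simp: permutes_less)
      also have "\<dots> = (\<Prod>i\<in>S. Q i (p i)) * (\<Prod>i\<in>?U-S. P i (p i))"
        using S by (subst prod.If_cases) (auto simp: Int_absorb1 Diff_eq intro!: arg_cong2[where f="(*)"] prod.cong)
      finally show "signof p * ((\<Prod>i\<in>S. Q i (p i)) * (\<Prod>i\<in>?U-S. P i (p i))) =
         signof p * (\<Prod>i = 0..<n. mat n n (\<lambda>(a,b). if a \<in> S then Q a b else P a b) $$ (i, p i))"
        by simp
    qed
  qed
  finally show ?thesis .
qed

lemma det_rows_scale:
  fixes c :: "nat \<Rightarrow> 'a::comm_ring_1"
  shows "det (mat n n (\<lambda>(a,b). c a * F a b)) = (\<Prod>a<n. c a) * det (mat n n (\<lambda>(a,b). F a b))"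
proof -
  have "det (mat n n (\<lambda>(a,b). c a * F a b)) =
     (\<Sum>p\<in>{p. p permutes {0..<n}}. signof p * ((\<Prod>i=0..<n. c i) * (\<Prod>i=0..<n. F i (p i))))"
    by (subst det_def'[of _ n]) (auto intro!: sum.cong simp: prod.distrib permutes_less)
  also have "\<dots> = (\<Prod>a<n. c a) * det (mat n n (\<lambda>(a,b). F a b))"
    by (subst det_def'[of _ n]) (auto intro!: sum.cong simp: sum_distrib_left permutes_less atLeast0LessThan)
  finally show ?thesis .
qed

lemma vandermonde: "det (mat n n (\<lambda>(a,b). u a ^ b)) = Vand n u"
proof (induction n)
  case 0
  show ?case by (simp add: Vand_def det_def)
next
  case (Suc n)
  define A where "A = mat (Suc n) (Suc n) (\<lambda>(a,b). u a ^ b)"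
  define E where "E = mat (Suc n) (Suc n) (\<lambda>(i,j). (if i = j then 1 else 0) + (if j = Suc i then - u n else 0))"
  have A: "A \<in> carrier_mat (Suc n) (Suc n)" and E: "E \<in> carrier_mat (Suc n) (Suc n)"
    by (auto simp: A_def E_def)
  have detE: "det E = 1"
    by (subst det_upper_triangular[OF _ E]) (auto simp: upper_triangular_def E_def prod_list_diag_prod)
  define B where "B = A * E"
  have B: "B \<in> carrier_mat (Suc n) (Suc n)" using A E by (auto simp: B_def)
  have Bij: "B $$ (a, j) = (if j = 0 then 1 else u a ^ (j - 1) * (u a - u n))" if "a < Suc n" "j < Suc n" for a j
  proof -
    have "B $$ (a, j) = (\<Sum>i = 0..<Suc n. u a ^ i * ((if i = j then 1 else 0) + (if j = Suc i then - u n else 0)))"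
      using that by (simp add: B_def A_def E_def scalar_prod_def)
    also have "\<dots> = (\<Sum>i = 0..<Suc n. u a ^ i * (if i = j then 1 else 0)) + (\<Sum>i = 0..<Suc n. u a ^ i * (if j = Suc i then - u n else 0))"
      by (simp only: distrib_left sum.distrib)
    also have "\<dots> = (if j = 0 then 1 else u a ^ (j - 1) * (u a - u n))"
    proof -
      have 1: "(\<Sum>i = 0..<Suc n. u a ^ i * (if i = j then 1 else 0)) = u a ^ j"
        using that by (simp add: if_distrib cong: if_cong)
      show ?thesis
      proof (cases j)
        case 0 then show ?thesis using 1 by simp
      next
        case (Suc j')
        have "(\<Sum>i = 0..<Suc n. u a ^ i * (if j = Suc i then - u n else 0)) = (\<Sum>i = 0..<Suc n. (if i = j' then - u n * u a ^ i else 0))"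
          using Suc by (intro sum.cong) auto
        also have "\<dots> = - u n * u a ^ j'" using Suc that by simp
        finally show ?thesis using Suc 1 by (simp add: algebra_simps)
      qed
    qed
    finally show ?thesis .
  qed
  have "det B = det A" unfolding B_def by (simp add: det_mult[OF A E] detE)
  moreover have "det B = (\<Sum>j<Suc n. B $$ (n,j) * cofactor B n j)"
    by (rule laplace_expansion_row[OF B]) simp
  moreover have "(\<Sum>j<Suc n. B $$ (n,j) * cofactor B n j) = cofactor B n 0"
    by (subst sum.lessThan_Suc_shift) (simp add: Bij)
  moreover have "mat_delete B n 0 = mat n n (\<lambda>(a,b). (u a - u n) * u a ^ b)"
    using B by (intro eq_matI) (auto simp: mat_delete_def Bij mult.commute)
  moreover have "det (mat n n (\<lambda>(a,b). (u a - u n) * u a ^ b)) = (\<Prod>a<n. u a - u n) * Vand n u"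
    by (subst det_rows_scale) (simp add: Suc.IH)
  moreover have "(-1)^n * (\<Prod>a<n. u a - u n) = (\<Prod>a<n. u n - u a)"
  proof -
    have "(\<Prod>a<n. u n - u a) = (\<Prod>a<n. (-1) * (u a - u n))" by simp
    also have "\<dots> = (\<Prod>a<n. (-1::complex)) * (\<Prod>a<n. u a - u n)" by (rule prod.distrib)
    also have "\<dots> = (-1)^n * (\<Prod>a<n. u a - u n)" by simp
    finally show ?thesis by simp
  qed
  ultimately have "det A = (\<Prod>a<n. u n - u a) * Vand n u"
    by (simp add: cofactor_def)
  then show ?case by (simp add: A_def Vand_def mult.commute)
qed

lemma Vand_cong: "(\<And>a. a < n \<Longrightarrow> u a = v a) \<Longrightarrow> Vand n u = Vand n v"
  unfolding Vand_def by (intro prod.cong refl) auto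

lemma Vand_shift: "Vand n (\<lambda>a. u a + c) = Vand n u"
  unfolding Vand_def by simp

lemma Vand_nonzero: "inj_on u {..<n} \<Longrightarrow> Vand n u \<noteq> 0"
  unfolding Vand_def by (force simp: inj_on_def)

definition Vup :: "nat \<Rightarrow> (nat \<Rightarrow> complex) \<Rightarrow> complex" where
  "Vup n u = (\<Prod>a<n. \<Prod>c\<in>{Suc a..<n}. u a - u c)"

lemma Vand_Sigma: "Vand n u = (\<Prod>(a,c)\<in>Sigma {..<n} (\<lambda>a. {..<a}). u a - u c)"
  unfolding Vand_def by (subst prod.Sigma) auto

lemma Vup_Sigma: "Vup n u = (\<Prod>(a,c)\<in>Sigma {..<n} (\<lambda>a. {Suc a..<n}). u a - u c)"
  unfolding Vup_def by (subst prod.Sigma) auto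

lemma Vand_rev: "Vand n (\<lambda>i. u (n - 1 - i)) = Vup n u"
  unfolding Vand_Sigma Vup_Sigma
  by (rule prod.reindex_bij_witness[where i="\<lambda>(a,c). (n-1-a, n-1-c)" and j="\<lambda>(a,c). (n-1-a, n-1-c)"]) auto

lemma prod_neg: "finite S \<Longrightarrow> (\<Prod>x\<in>S. - f x) = (-1) ^ card S * (\<Prod>x\<in>S. f x :: complex)"
  by (induct S rule: finite_induct) auto

lemma Vup_sign: "Vup n u = (-1) ^ card (Sigma {..<n} (\<lambda>a. {..<a})) * Vand n u"
proof -
  have "Vup n u = (\<Prod>x\<in>Sigma {..<n} (\<lambda>a. {..<a}). - (u (fst x) - u (snd x)))"
    unfolding Vup_Sigma
    by (rule prod.reindex_bij_witness[where i="\<lambda>(a,c). (c,a)" and j="\<lambda>(a,c). (c,a)"]) auto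
  also have "\<dots> = (-1) ^ card (Sigma {..<n} (\<lambda>a. {..<a})) * (\<Prod>x\<in>Sigma {..<n} (\<lambda>a. {..<a}). (u (fst x) - u (snd x)))"
    by (rule prod_neg) auto
  finally show ?thesis by (simp add: Vand_Sigma case_prod_beta)
qed

lemma Vall: "(\<Prod>a<n. \<Prod>c\<in>{..<n}-{a}. u a - u c) = Vand n u * Vup n u"
proof -
  have "(\<Prod>a<n. \<Prod>c\<in>{..<n}-{a}. u a - u c) = (\<Prod>a<n. (\<Prod>c<a. u a - u c) * (\<Prod>c\<in>{Suc a..<n}. u a - u c))"
  proof (rule prod.cong[OF refl])
    fix a assume "a \<in> {..<n}"
    then have e: "{..<n}-{a} = {..<a} \<union> {Suc a..<n}" by auto
    have "(\<Prod>c\<in>{..<a} \<union> {Suc a..<n}. u a - u c) = (\<Prod>c<a. u a - u c) * (\<Prod>c\<in>{Suc a..<n}. u a - u c)"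
      by (rule prod.union_disjoint) auto
    then show "(\<Prod>c\<in>{..<n}-{a}. u a - u c) = (\<Prod>c<a. u a - u c) * (\<Prod>c\<in>{Suc a..<n}. u a - u c)"
      by (simp only: e)
  qed
  then show ?thesis by (simp add: prod.distrib Vand_def Vup_def)
qed

lemma poly_sum_lt: "degree (p::complex poly) < n \<Longrightarrow> poly p z = (\<Sum>k<n. coeff p k * z ^ k)"
proof -
  assume d: "degree p < n"
  have "poly p z = (\<Sum>k\<le>degree p. coeff p k * z ^ k)" by (rule poly_altdef)
  also have "\<dots> = (\<Sum>k<n. coeff p k * z ^ k)"
    using d by (intro sum.mono_neutral_left) (auto simp: coeff_eq_0)
  finally show ?thesis .
qed

definition qpol :: "nat \<Rightarrow> (nat \<Rightarrow> complex) \<Rightarrow> nat \<Rightarrow> complex poly" where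
  "qpol n y b = (\<Prod>c\<in>{..<n}-{b}. [:- y c, 1:])"

lemma qpol_poly: "poly (qpol n y b) z = (\<Prod>c\<in>{..<n}-{b}. z - y c)"
  unfolding qpol_def by (simp add: poly_prod)

lemma qpol_degree: "b < n \<Longrightarrow> degree (qpol n y b) < n"
proof -
  assume b: "b < n"
  have "degree (qpol n y b) \<le> (\<Sum>c\<in>{..<n}-{b}. degree [:- y c, 1:])"
    using degree_prod_sum_le[of "{..<n}-{b}" "\<lambda>c. [:- y c, 1:]"] by (simp add: o_def qpol_def)
  also have "\<dots> = card ({..<n}-{b})" by simp
  also have "\<dots> < n" using b by simp
  finally show ?thesis .
qed

lemma G_lemma:
  "det (mat n n (\<lambda>(a,b). \<Prod>c\<in>{..<n}-{b}. w a - y c))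
     = Vand n w * det (mat n n (\<lambda>(k,b). coeff (qpol n y b) k))"
proof -
  have "mat n n (\<lambda>(a,b). \<Prod>c\<in>{..<n}-{b}. w a - y c)
     = mat n n (\<lambda>(a,k). w a ^ k) * mat n n (\<lambda>(k,b). coeff (qpol n y b) k)"
  proof (rule eq_matI)
    fix a b assume ab: "a < dim_row (mat n n (\<lambda>(a, k). w a ^ k) * mat n n (\<lambda>(k, b). coeff (qpol n y b) k))"
       "b < dim_col (mat n n (\<lambda>(a, k). w a ^ k) * mat n n (\<lambda>(k, b). coeff (qpol n y b) k))"
    then have a: "a < n" and b: "b < n" by auto
    have "(mat n n (\<lambda>(a, k). w a ^ k) * mat n n (\<lambda>(k, b). coeff (qpol n y b) k)) $$ (a, b)
       = (\<Sum>k = 0..<n. w a ^ k * coeff (qpol n y b) k)"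
      using a b by (simp add: scalar_prod_def)
    also have "\<dots> = poly (qpol n y b) (w a)"
      using poly_sum_lt[OF qpol_degree[OF b, of y], of "w a"] by (simp add: atLeast0LessThan mult.commute)
    finally show "mat n n (\<lambda>(a,b). \<Prod>c\<in>{..<n}-{b}. w a - y c) $$ (a, b) =
       (mat n n (\<lambda>(a, k). w a ^ k) * mat n n (\<lambda>(k, b). coeff (qpol n y b) k)) $$ (a, b)"
      using a b by (simp add: qpol_poly)
  qed auto
  then show ?thesis
    by (simp add: det_mult[of _ n] vandermonde)
qed

lemma detK: assumes "inj_on y {..<n}"
  shows "det (mat n n (\<lambda>(k,b). coeff (qpol n y b) k)) = Vand n (\<lambda>i. y (n - 1 - i))"
proof -
  have ME: "mat n n (\<lambda>(a,b). \<Prod>c\<in>{..<n}-{b}. y a - y c)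
      = mat n n (\<lambda>(a,b). (\<Prod>c\<in>{..<n}-{a}. y a - y c) * (if a = b then 1 else 0))"
    by (rule eq_matI) auto
  then have "det (mat n n (\<lambda>(a,b). \<Prod>c\<in>{..<n}-{b}. y a - y c)) = Vand n y * Vup n y"
  proof -
    have I: "mat n n (\<lambda>(a,b). if a = b then 1 else 0) = (1\<^sub>m n :: complex mat)"
      by (rule eq_matI) auto
    have "det (mat n n (\<lambda>(a,b). \<Prod>c\<in>{..<n}-{b}. y a - y c))
       = det (mat n n (\<lambda>(a,b). (\<Prod>c\<in>{..<n}-{a}. y a - y c) * (if a = b then 1 else 0)))"
      using ME by simp
    also have "\<dots> = (\<Prod>a<n. \<Prod>c\<in>{..<n}-{a}. y a - y c) * det (mat n n (\<lambda>(a,b). if a = b then 1 else (0::complex)))"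
      by (rule det_rows_scale)
    also have "\<dots> = Vand n y * Vup n y" by (simp only: I det_one Vall mult_1_right)
    finally show ?thesis .
  qed
  then have "Vand n y * Vup n y = Vand n y * det (mat n n (\<lambda>(k,b). coeff (qpol n y b) k))"
    by (simp only: G_lemma)
  then have "Vup n y = det (mat n n (\<lambda>(k,b). coeff (qpol n y b) k))"
    using Vand_nonzero[OF assms] by simp
  then show ?thesis using Vand_rev[of n y] by simp
qed

lemma cauchy:
  assumes "\<forall>a<n. \<forall>b<n. u a \<noteq> y b" "inj_on y {..<n}"
  shows "det (mat n n (\<lambda>(a,b). 1 / (u a - y b))) * (\<Prod>a<n. \<Prod>b<n. u a - y b)
     = Vand n u * Vand n (\<lambda>i. y (n - 1 - i))"
proof -
  have ME: "mat n n (\<lambda>(a,b). \<Prod>c\<in>{..<n}-{b}. u a - y c)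
      = mat n n (\<lambda>(a,b). (\<Prod>c<n. u a - y c) * (1 / (u a - y b)))"
  proof (rule eq_matI)
    fix a b assume "a < dim_row (mat n n (\<lambda>(a,b). (\<Prod>c<n. u a - y c) * (1 / (u a - y b))))"
      "b < dim_col (mat n n (\<lambda>(a,b). (\<Prod>c<n. u a - y c) * (1 / (u a - y b))))"
    then have a: "a < n" and b: "b < n" by auto
    have "(\<Prod>c<n. u a - y c) = (u a - y b) * (\<Prod>c\<in>{..<n}-{b}. u a - y c)"
      using b by (simp add: prod.remove)
    then show "mat n n (\<lambda>(a,b). \<Prod>c\<in>{..<n}-{b}. u a - y c) $$ (a, b) =
        mat n n (\<lambda>(a,b). (\<Prod>c<n. u a - y c) * (1 / (u a - y b))) $$ (a, b)"
      using a b assms(1) by simp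
  qed auto
  then have "(\<Prod>a<n. \<Prod>c<n. u a - y c) * det (mat n n (\<lambda>(a,b). 1 / (u a - y b)))
       = Vand n u * det (mat n n (\<lambda>(k,b). coeff (qpol n y b) k))"
  proof -
    have "(\<Prod>a<n. \<Prod>c<n. u a - y c) * det (mat n n (\<lambda>(a,b). 1 / (u a - y b)))
      = det (mat n n (\<lambda>(a,b). (\<Prod>c<n. u a - y c) * (1 / (u a - y b))))"
      by (rule det_rows_scale[symmetric])
    also have "\<dots> = det (mat n n (\<lambda>(a,b). \<Prod>c\<in>{..<n}-{b}. u a - y c))"
      using ME by simp
    also have "\<dots> = Vand n u * det (mat n n (\<lambda>(k,b). coeff (qpol n y b) k))"
      by (rule G_lemma)
    finally show ?thesis .
  qed
  then show ?thesis by (simp add: detK[OF assms(2)] mult.commute)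
qed

lemma expand_A:
  fixes z :: "nat \<Rightarrow> complex"
  shows "det (mat M M (\<lambda>(a,b). z a ^ b - f (z a) * (z a + d) ^ b)) =
    (\<Sum>S\<in>Pow {0..<M}. (\<Prod>a<M. if a \<in> S then - f (z a) else 1) * Vand M (\<lambda>a. if a \<in> S then z a + d else z a))"
proof -
  have "det (mat M M (\<lambda>(a,b). z a ^ b - f (z a) * (z a + d) ^ b))
     = det (mat M M (\<lambda>(a,b). z a ^ b + (- f (z a)) * (z a + d) ^ b))" by simp
  also have "\<dots> = (\<Sum>S\<in>Pow {0..<M}. det (mat M M (\<lambda>(a,b). if a \<in> S then (- f (z a)) * (z a + d) ^ b else z a ^ b)))"
    by (rule det_rows_expand)
  also have "\<dots> = (\<Sum>S\<in>Pow {0..<M}. (\<Prod>a<M. if a \<in> S then - f (z a) else 1) * Vand M (\<lambda>a. if a \<in> S then z a + d else z a))"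
  proof (rule sum.cong[OF refl])
    fix S
    have "mat M M (\<lambda>(a,b). if a \<in> S then (- f (z a)) * (z a + d) ^ b else z a ^ b)
       = mat M M (\<lambda>(a,b). (if a \<in> S then - f (z a) else 1) * (if a \<in> S then z a + d else z a) ^ b)"
      by (rule eq_matI) auto
    then show "det (mat M M (\<lambda>(a,b). if a \<in> S then (- f (z a)) * (z a + d) ^ b else z a ^ b)) =
      (\<Prod>a<M. if a \<in> S then - f (z a) else 1) * Vand M (\<lambda>a. if a \<in> S then z a + d else z a)"
      by (simp only: det_rows_scale vandermonde)
  qed
  finally show ?thesis .
qed

lemma expand_I1:
  "det (mat N N (\<lambda>(a,b). t_mu \<mu> \<eta> (x a - y b))) =
    (\<Sum>S\<in>Pow {0..<N}. (\<Prod>a<N. if a \<in> S then \<mu> else -1) *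
        det (mat N N (\<lambda>(a,b). 1 / ((if a \<in> S then x a else x a + \<eta>) - y b))))"
proof -
  have "det (mat N N (\<lambda>(a,b). t_mu \<mu> \<eta> (x a - y b)))
     = det (mat N N (\<lambda>(a,b). - 1 / (x a - y b + \<eta>) + \<mu> / (x a - y b)))"
    by (simp add: t_mu_def)
  also have "\<dots> = (\<Sum>S\<in>Pow {0..<N}. det (mat N N (\<lambda>(a,b). if a \<in> S then \<mu> / (x a - y b) else - 1 / (x a - y b + \<eta>))))"
    by (rule det_rows_expand)
  also have "\<dots> = (\<Sum>S\<in>Pow {0..<N}. (\<Prod>a<N. if a \<in> S then \<mu> else -1) *
        det (mat N N (\<lambda>(a,b). 1 / ((if a \<in> S then x a else x a + \<eta>) - y b))))"
  proof (rule sum.cong[OF refl])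
    fix S
    have "mat N N (\<lambda>(a,b). if a \<in> S then \<mu> / (x a - y b) else - 1 / (x a - y b + \<eta>))
       = mat N N (\<lambda>(a,b). (if a \<in> S then \<mu> else -1) * (1 / ((if a \<in> S then x a else x a + \<eta>) - y b)))"
      by (rule eq_matI) (auto simp: algebra_simps)
    then show "det (mat N N (\<lambda>(a,b). if a \<in> S then \<mu> / (x a - y b) else - 1 / (x a - y b + \<eta>))) =
       (\<Prod>a<N. if a \<in> S then \<mu> else -1) * det (mat N N (\<lambda>(a,b). 1 / ((if a \<in> S then x a else x a + \<eta>) - y b)))"
      by (simp only: det_rows_scale)
  qed
  finally show ?thesis .
qed

lemma expand_I2:
  "det (mat N N (\<lambda>(a,b). t_mu \<mu> \<eta> (x a - y b))) =
    (\<Sum>S\<in>Pow {0..<N}. (\<Prod>b<N. if b \<in> S then - \<mu> else 1) *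
        det (mat N N (\<lambda>(b,a). 1 / ((if b \<in> S then y b else y b - \<eta>) - x a))))"
proof -
  have "det (mat N N (\<lambda>(a,b). t_mu \<mu> \<eta> (x a - y b))) = det (transpose_mat (mat N N (\<lambda>(a,b). t_mu \<mu> \<eta> (x a - y b))))"
    by (rule det_transpose[symmetric]) auto
  also have "transpose_mat (mat N N (\<lambda>(a,b). t_mu \<mu> \<eta> (x a - y b)))
     = mat N N (\<lambda>(b,a). - 1 / (x a - y b + \<eta>) + \<mu> / (x a - y b))"
    by (rule eq_matI) (auto simp: t_mu_def)
  also have "det \<dots> = (\<Sum>S\<in>Pow {0..<N}. det (mat N N (\<lambda>(b,a). if b \<in> S then \<mu> / (x a - y b) else - 1 / (x a - y b + \<eta>))))"
    by (rule det_rows_expand)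
  also have "\<dots> = (\<Sum>S\<in>Pow {0..<N}. (\<Prod>b<N. if b \<in> S then - \<mu> else 1) *
        det (mat N N (\<lambda>(b,a). 1 / ((if b \<in> S then y b else y b - \<eta>) - x a))))"
  proof (rule sum.cong[OF refl])
    fix S
    have "mat N N (\<lambda>(b,a). if b \<in> S then \<mu> / (x a - y b) else - 1 / (x a - y b + \<eta>))
       = mat N N (\<lambda>(b,a). (if b \<in> S then - \<mu> else 1) * (1 / ((if b \<in> S then y b else y b - \<eta>) - x a)))"
    proof (rule eq_matI)
      fix b a assume "b < dim_row (mat N N (\<lambda>(b,a). (if b \<in> S then - \<mu> else 1) * (1 / ((if b \<in> S then y b else y b - \<eta>) - x a))))"
        "a < dim_col (mat N N (\<lambda>(b,a). (if b \<in> S then - \<mu> else 1) * (1 / ((if b \<in> S then y b else y b - \<eta>) - x a))))"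
      then have ab: "b < N" "a < N" by auto
      have 1: "\<mu> / (x a - y b) = - \<mu> * (1 / (y b - x a))"
        by (metis (no_types, lifting) divide_minus_right minus_diff_eq minus_divide_left times_divide_eq_right mult_1_right)
      have 2: "- 1 / (x a - y b + \<eta>) = 1 / (y b - \<eta> - x a)"
        by (metis (no_types, lifting) divide_minus_right minus_diff_eq minus_divide_left diff_diff_eq2 diff_minus_eq_add add.commute)
      show "mat N N (\<lambda>(b,a). if b \<in> S then \<mu> / (x a - y b) else - 1 / (x a - y b + \<eta>)) $$ (b, a) =
         mat N N (\<lambda>(b,a). (if b \<in> S then - \<mu> else 1) * (1 / ((if b \<in> S then y b else y b - \<eta>) - x a))) $$ (b, a)"
        using ab 1 2 by simp
    qed auto
    then show "det (mat N N (\<lambda>(b,a). if b \<in> S then \<mu> / (x a - y b) else - 1 / (x a - y b + \<eta>))) =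
       (\<Prod>b<N. if b \<in> S then - \<mu> else 1) * det (mat N N (\<lambda>(b,a). 1 / ((if b \<in> S then y b else y b - \<eta>) - x a)))"
      by (simp only: det_rows_scale)
  qed
  finally show ?thesis .
qed

lemma A_minus_exp: "A_minus \<eta> N x f = (\<Sum>S\<in>Pow {0..<N}. (\<Prod>a<N. if a \<in> S then - f (x a) else 1) * Vand N (\<lambda>a. if a \<in> S then x a - \<eta> else x a)) / Vand N x"
proof -
  have "det (mat N N (\<lambda>(a,b). x a ^ b - f (x a) * (x a - \<eta>) ^ b)) = (\<Sum>S\<in>Pow {0..<N}. (\<Prod>a<N. if a \<in> S then - f (x a) else 1) * Vand N (\<lambda>a. if a \<in> S then x a - \<eta> else x a))"
    using expand_A[of N x f "-\<eta>"] by (simp only: diff_conv_add_uminus)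
  then show ?thesis unfolding A_minus_def by simp
qed

lemma A_plus_exp: "A_plus \<eta> N y f = (\<Sum>S\<in>Pow {0..<N}. (\<Prod>a<N. if a \<in> S then - f (y a) else 1) * Vand N (\<lambda>a. if a \<in> S then y a + \<eta> else y a)) / Vand N y"
  unfolding A_plus_def using expand_A[of N y f "\<eta>"] by simp

lemma perS1:
  assumes ix: "inj_on x {..<N}" and iy: "inj_on y {..<N}"
    and xy: "\<forall>a<N. \<forall>b<N. x a \<noteq> y b"
    and xye: "\<forall>a<N. \<forall>b<N. x a - y b + \<eta> \<noteq> 0"
  shows "(\<Prod>a<N. \<Prod>b<N. x a - y b + \<eta>) / (Vand N x * Vand N (\<lambda>i. y (N - 1 - i))) *
      ((\<Prod>a<N. if a \<in> S then \<mu> else -1) * det (mat N N (\<lambda>(a,b). 1 / ((if a \<in> S then x a else x a + \<eta>) - y b))))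
    = (-1) ^ N * ((\<Prod>a<N. if a \<in> S then - (\<mu> * E_plus \<eta> N y (x a)) else 1) * Vand N (\<lambda>a. if a \<in> S then x a - \<eta> else x a)) / Vand N x"
proof -
  define xt where "xt a = (if a \<in> S then x a else x a + \<eta>)" for a
  define xm where "xm a = (if a \<in> S then x a - \<eta> else x a)" for a
  define D where "D = (\<Prod>a<N. \<Prod>b<N. xt a - y b)"
  define F where "F = (\<Prod>a<N. if a \<in> S then E_plus \<eta> N y (x a) else 1)"
  define C where "C = det (mat N N (\<lambda>(a,b). 1 / (xt a - y b)))"
  define cc where "cc = (\<Prod>a<N. if a \<in> S then \<mu> else -1)"
  define cc' where "cc' = (\<Prod>a<N. if a \<in> S then - (\<mu> * E_plus \<eta> N y (x a)) else 1)"
  define Vyr where "Vyr = Vand N (\<lambda>i. y (N - 1 - i))"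
  have nz: "\<forall>a<N. \<forall>b<N. xt a \<noteq> y b"
  proof (intro allI impI)
    fix a b assume "a < N" "b < N"
    then show "xt a \<noteq> y b" using xy xye unfolding xt_def
      by (auto simp: algebra_simps)
  qed
  have Dnz: "D \<noteq> 0" unfolding D_def using nz by simp
  have Vx: "Vand N x \<noteq> 0" using Vand_nonzero[OF ix] .
  have Vyr: "Vyr \<noteq> 0" unfolding Vyr_def
    by (simp only: Vand_rev Vup_sign) (use Vand_nonzero[OF iy] in simp)
  have Cf: "C * D = Vand N xt * Vyr"
    unfolding C_def D_def Vyr_def by (rule cauchy[OF nz iy])
  have PP: "(\<Prod>a<N. \<Prod>b<N. x a - y b + \<eta>) = D * F"
  proof -
    have "(\<Prod>a<N. \<Prod>b<N. x a - y b + \<eta>) = (\<Prod>a<N. (\<Prod>b<N. xt a - y b) * (if a \<in> S then E_plus \<eta> N y (x a) else 1))"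
    proof (rule prod.cong[OF refl])
      fix a assume a: "a \<in> {..<N}"
      show "(\<Prod>b<N. x a - y b + \<eta>) = (\<Prod>b<N. xt a - y b) * (if a \<in> S then E_plus \<eta> N y (x a) else 1)"
      proof (cases "a \<in> S")
        case True
        have "(\<Prod>b<N. xt a - y b) * E_plus \<eta> N y (x a) = (\<Prod>b<N. (x a - y b) * ((x a - y b + \<eta>) / (x a - y b)))"
        proof -
          have "(\<Prod>b<N. xt a - y b) * E_plus \<eta> N y (x a) = (\<Prod>b<N. x a - y b) * (\<Prod>b<N. (x a - y b + \<eta>) / (x a - y b))"
            unfolding E_plus_def xt_def using True by simp
          also have "\<dots> = (\<Prod>b<N. (x a - y b) * ((x a - y b + \<eta>) / (x a - y b)))"
            by (rule prod.distrib[symmetric])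
          finally show ?thesis .
        qed
        also have "\<dots> = (\<Prod>b<N. x a - y b + \<eta>)"
          using a xy by (intro prod.cong refl) auto
        finally show ?thesis using True by simp
      next
        case False
        then show ?thesis unfolding xt_def by (simp add: algebra_simps)
      qed
    qed
    also have "\<dots> = D * F" unfolding D_def F_def by (rule prod.distrib)
    finally show ?thesis .
  qed
  have Vxt: "Vand N xt = Vand N xm"
  proof -
    have "xt = (\<lambda>a. xm a + \<eta>)" by (auto simp: xt_def xm_def fun_eq_iff)
    then show ?thesis by (simp add: Vand_shift)
  qed
  have cF: "cc * F = (-1) ^ N * cc'"
  proof -
    have "cc * F = (\<Prod>a<N. (-1) * (if a \<in> S then - (\<mu> * E_plus \<eta> N y (x a)) else 1))"
      unfolding cc_def F_def by (subst prod.distrib[symmetric]) (intro prod.cong refl, auto)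
    also have "\<dots> = (\<Prod>a<N. (-1::complex)) * cc'" unfolding cc'_def by (rule prod.distrib)
    finally show ?thesis by simp
  qed
  have C: "C = Vand N xt * Vyr / D" using Cf Dnz by (simp add: eq_divide_eq)
  have "(D * F) / (Vand N x * Vyr) * (cc * C) = (cc * F) * Vand N xt / Vand N x"
    unfolding C using Dnz Vx Vyr by (simp add: field_simps)
  also have "\<dots> = (-1) ^ N * (cc' * Vand N xm) / Vand N x" by (simp add: cF Vxt)
  finally show ?thesis
    unfolding PP[symmetric] C_def cc_def cc'_def Vyr_def xt_def xm_def .
qed

lemma perS2:
  assumes ix: "inj_on x {..<N}" and iy: "inj_on y {..<N}"
    and xy: "\<forall>a<N. \<forall>b<N. x a \<noteq> y b"
    and xye: "\<forall>a<N. \<forall>b<N. x a - y b + \<eta> \<noteq> 0"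
  shows "(\<Prod>a<N. \<Prod>b<N. x a - y b + \<eta>) / (Vand N x * Vand N (\<lambda>i. y (N - 1 - i))) *
      ((\<Prod>b<N. if b \<in> S then - \<mu> else 1) * det (mat N N (\<lambda>(b,a). 1 / ((if b \<in> S then y b else y b - \<eta>) - x a))))
    = (-1) ^ N * ((\<Prod>b<N. if b \<in> S then - (\<mu> * E_minus \<eta> N x (y b)) else 1) * Vand N (\<lambda>b. if b \<in> S then y b + \<eta> else y b)) / Vand N y"
proof -
  define yt where "yt b = (if b \<in> S then y b else y b - \<eta>)" for b
  define yp where "yp b = (if b \<in> S then y b + \<eta> else y b)" for b
  define D where "D = (\<Prod>b<N. \<Prod>a<N. yt b - x a)"
  define F where "F = (\<Prod>b<N. (-1) ^ N * (if b \<in> S then E_minus \<eta> N x (y b) else 1))"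
  define C where "C = det (mat N N (\<lambda>(b,a). 1 / (yt b - x a)))"
  define cc where "cc = (\<Prod>b<N. if b \<in> S then - \<mu> else 1)"
  define cc' where "cc' = (\<Prod>b<N. if b \<in> S then - (\<mu> * E_minus \<eta> N x (y b)) else 1)"
  define s where "s = ((-1::complex) ^ card (Sigma {..<N} (\<lambda>a. {..<a})))"
  have snz: "s \<noteq> 0" unfolding s_def by simp
  have Vxr: "Vand N (\<lambda>i. x (N - 1 - i)) = s * Vand N x"
    unfolding s_def by (simp only: Vand_rev Vup_sign)
  have Vyr: "Vand N (\<lambda>i. y (N - 1 - i)) = s * Vand N y"
    unfolding s_def by (simp only: Vand_rev Vup_sign)
  have nz: "\<forall>b<N. \<forall>a<N. yt b \<noteq> x a"
  proof (intro allI impI)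
    fix a b assume "a < N" "b < N"
    then have h: "x a \<noteq> y b" "x a - y b + \<eta> \<noteq> 0" using xy xye by auto
    show "yt b \<noteq> x a"
    proof
      assume "yt b = x a"
      then show False using h unfolding yt_def by (cases "b \<in> S") (auto simp: algebra_simps)
    qed
  qed
  have Dnz: "D \<noteq> 0" unfolding D_def using nz by simp
  have Vx: "Vand N x \<noteq> 0" using Vand_nonzero[OF ix] .
  have Vy: "Vand N y \<noteq> 0" using Vand_nonzero[OF iy] .
  have Cf: "C * D = Vand N yt * Vand N (\<lambda>i. x (N - 1 - i))"
    unfolding C_def D_def by (rule cauchy[OF nz ix])
  have PP: "(\<Prod>a<N. \<Prod>b<N. x a - y b + \<eta>) = D * F"
  proof -
    have "(\<Prod>a<N. \<Prod>b<N. x a - y b + \<eta>) = (\<Prod>b<N. \<Prod>a<N. x a - y b + \<eta>)"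
      by (rule prod.swap)
    also have "\<dots> = (\<Prod>b<N. (\<Prod>a<N. yt b - x a) * ((-1) ^ N * (if b \<in> S then E_minus \<eta> N x (y b) else 1)))"
    proof (rule prod.cong[OF refl])
      fix b assume b: "b \<in> {..<N}"
      show "(\<Prod>a<N. x a - y b + \<eta>) = (\<Prod>a<N. yt b - x a) * ((-1) ^ N * (if b \<in> S then E_minus \<eta> N x (y b) else 1))"
      proof (cases "b \<in> S")
        case True
        have "(\<Prod>a<N. x a - y b + \<eta>) = (\<Prod>a<N. (y b - x a) * (- ((y b - x a - \<eta>) / (y b - x a))))"
        proof (rule prod.cong[OF refl])
          fix a assume "a \<in> {..<N}"
          then have "x a \<noteq> y b" using b xy by auto
          then have "y b - x a \<noteq> 0" by simp
          then show "x a - y b + \<eta> = (y b - x a) * (- ((y b - x a - \<eta>) / (y b - x a)))"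
            by (simp add: field_simps)
        qed
        also have "\<dots> = (\<Prod>a<N. y b - x a) * (\<Prod>a<N. - ((y b - x a - \<eta>) / (y b - x a)))"
          by (rule prod.distrib)
        also have "(\<Prod>a<N. - ((y b - x a - \<eta>) / (y b - x a))) = (-1) ^ N * E_minus \<eta> N x (y b)"
          unfolding E_minus_def by (subst prod_neg) auto
        finally show ?thesis using True by (simp add: yt_def)
      next
        case False
        have "(\<Prod>a<N. x a - y b + \<eta>) = (\<Prod>a<N. - (y b - \<eta> - x a))"
          by (intro prod.cong refl) (auto simp: algebra_simps)
        also have "\<dots> = (-1) ^ N * (\<Prod>a<N. y b - \<eta> - x a)"
          by (subst prod_neg) auto
        finally show ?thesis using False by (simp add: yt_def)
      qed
    qed
    also have "\<dots> = D * F" unfolding D_def F_def by (rule prod.distrib)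
    finally show ?thesis .
  qed
  have Vyt: "Vand N yt = Vand N yp"
  proof -
    have "yp = (\<lambda>a. yt a + \<eta>)" by (auto simp: yt_def yp_def fun_eq_iff)
    then show ?thesis by (simp add: Vand_shift)
  qed
  have sq: "((-1::complex) ^ N) ^ N = (-1) ^ N"
    by (cases "even N") (auto simp: power_mult[symmetric])
  have cF: "cc * F = (-1) ^ N * cc'"
  proof -
    have "F = (\<Prod>b<N. (-1::complex) ^ N) * (\<Prod>b<N. (if b \<in> S then E_minus \<eta> N x (y b) else 1))"
      unfolding F_def by (rule prod.distrib)
    also have "\<dots> = (-1) ^ N * (\<Prod>b<N. (if b \<in> S then E_minus \<eta> N x (y b) else 1))"
      by (simp add: sq)
    finally have F: "F = \<dots>" .
    have "cc * (\<Prod>b<N. (if b \<in> S then E_minus \<eta> N x (y b) else 1)) = cc'"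
      unfolding cc_def cc'_def by (subst prod.distrib[symmetric]) (intro prod.cong refl, auto)
    then show ?thesis unfolding F by (simp add: algebra_simps)
  qed
  have C: "C = Vand N yt * Vand N (\<lambda>i. x (N - 1 - i)) / D" using Cf Dnz by (simp add: eq_divide_eq)
  have "(D * F) / (Vand N x * Vand N (\<lambda>i. y (N - 1 - i))) * (cc * C) = (cc * F) * Vand N yt / Vand N y"
    unfolding C Vxr Vyr using Dnz Vx Vy snz by (simp add: field_simps)
  also have "\<dots> = (-1) ^ N * (cc' * Vand N yp) / Vand N y" by (simp add: cF Vyt)
  finally show ?thesis
    unfolding PP[symmetric] C_def cc_def cc'_def yt_def yp_def .
qed

theorem mainTheorem6:
  fixes \<mu> \<eta> :: complex and N :: nat and x y :: "nat \<Rightarrow> complex"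
  assumes "\<eta> \<noteq> 0"
    and "inj_on x {..<N}" and "inj_on y {..<N}"
    and "\<forall>a<N. \<forall>b<N. x a \<noteq> y b"
    and "\<forall>a<N. \<forall>b<N. x a - y b + \<eta> \<noteq> 0"
  shows "Izergin \<mu> \<eta> N x y = (-1) ^ N * A_minus \<eta> N x (\<lambda>z. \<mu> * E_plus \<eta> N y z)
       \<and> Izergin \<mu> \<eta> N x y = (-1) ^ N * A_plus \<eta> N y (\<lambda>z. \<mu> * E_minus \<eta> N x z)"
proof
  let ?K = "(\<Prod>a<N. \<Prod>b<N. x a - y b + \<eta>) / (Vand N x * Vand N (\<lambda>i. y (N - 1 - i)))"
  have I: "Izergin \<mu> \<eta> N x y = ?K * det (mat N N (\<lambda>(a, b). t_mu \<mu> \<eta> (x a - y b)))"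
    unfolding Izergin_def by simp
  show "Izergin \<mu> \<eta> N x y = (-1) ^ N * A_minus \<eta> N x (\<lambda>z. \<mu> * E_plus \<eta> N y z)"
  proof -
    have "Izergin \<mu> \<eta> N x y = (\<Sum>S\<in>Pow {0..<N}. ?K * ((\<Prod>a<N. if a \<in> S then \<mu> else -1) *
        det (mat N N (\<lambda>(a,b). 1 / ((if a \<in> S then x a else x a + \<eta>) - y b)))))"
      unfolding I expand_I1 by (rule sum_distrib_left)
    also have "\<dots> = (\<Sum>S\<in>Pow {0..<N}. (-1) ^ N * ((\<Prod>a<N. if a \<in> S then - (\<mu> * E_plus \<eta> N y (x a)) else 1) * Vand N (\<lambda>a. if a \<in> S then x a - \<eta> else x a)) / Vand N x)"
      by (rule sum.cong[OF refl], rule perS1[OF assms(2-5)])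
    also have "\<dots> = (-1) ^ N * ((\<Sum>S\<in>Pow {0..<N}. (\<Prod>a<N. if a \<in> S then - (\<mu> * E_plus \<eta> N y (x a)) else 1) * Vand N (\<lambda>a. if a \<in> S then x a - \<eta> else x a)) / Vand N x)"
      by (simp add: sum_distrib_left sum_divide_distrib)
    also have "\<dots> = (-1) ^ N * A_minus \<eta> N x (\<lambda>z. \<mu> * E_plus \<eta> N y z)"
      by (simp only: A_minus_exp)
    finally show ?thesis .
  qed
  show "Izergin \<mu> \<eta> N x y = (-1) ^ N * A_plus \<eta> N y (\<lambda>z. \<mu> * E_minus \<eta> N x z)"
  proof -
    have "Izergin \<mu> \<eta> N x y = (\<Sum>S\<in>Pow {0..<N}. ?K * ((\<Prod>b<N. if b \<in> S then - \<mu> else 1) *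
        det (mat N N (\<lambda>(b,a). 1 / ((if b \<in> S then y b else y b - \<eta>) - x a)))))"
      unfolding I expand_I2 by (rule sum_distrib_left)
    also have "\<dots> = (\<Sum>S\<in>Pow {0..<N}. (-1) ^ N * ((\<Prod>b<N. if b \<in> S then - (\<mu> * E_minus \<eta> N x (y b)) else 1) * Vand N (\<lambda>b. if b \<in> S then y b + \<eta> else y b)) / Vand N y)"
      by (rule sum.cong[OF refl], rule perS2[OF assms(2-5)])
    also have "\<dots> = (-1) ^ N * ((\<Sum>S\<in>Pow {0..<N}. (\<Prod>b<N. if b \<in> S then - (\<mu> * E_minus \<eta> N x (y b)) else 1) * Vand N (\<lambda>b. if b \<in> S then y b + \<eta> else y b)) / Vand N y)"
      by (simp add: sum_distrib_left sum_divide_distrib)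
    also have "\<dots> = (-1) ^ N * A_plus \<eta> N y (\<lambda>z. \<mu> * E_minus \<eta> N x z)"
      by (simp only: A_plus_exp)
    finally show ?thesis .
  qed
qed

end
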